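(* Let $d\ge 5$. If every configuration in $Q^3_{d-1}$ of type $\varphi_1$, $\varphi_2$, $\varphi_3$ or $\varphi_4$ (with dimension $d-1$) is covered, then every configuration in $Q^3_d$ of type $t_1(d)$, $t_2(d)$, $t_3(d)$, $t_4(d)$ or $t_5(d)$ is covered.
   Context: For $n\in\mathbb{N}_0$, $Q^3_n$ is the $3$-uniform hypergraph on $V_n=\{0,1,2\}^n$ whose edges are the triples of pairwise distinct sequences agreeing in $n-1$ coordinates. A loose path from $v_0$ to $v_{2\ell}$ consists of distinct vertices $v_0,\dots,v_{2\ell}$ and distinct edges $e_i=\{v_{2i-2},v_{2i-1},v_{2i}\}$, $i=1,\dots,\ell$. A configuration in $Q^3_n$ is an ordered $4$-tuple $(a,b,x,y)$ of pairwise distinct vertices of $V_n$; it is covered if there is a loose path in $Q^3_n$ from $a$ to $b$ whose vertex set is exactly $V_n\setminus\{x,y\}$. For $v\in V_n$ write $v_i$ for its $i$-th coordinate and $v_{[k]}=(v_1,\dots,v_k)$. A symmetry is a bijection of $V_n$ obtained by permuting the coordinates and, independently in each coordinate, permuting the values $\{0,1,2\}$. A configuration $c=(a,b,x,y)$ in $Q^3_n$ is of a given type if, after applying some symmetry to all four vertices and possibly interchanging $x$ and $y$, the resulting configuration (still denoted $(a,b,x,y)$) satisfies (with $n$ the dimension): $t_1(n)$: $a_n=x_n=0$, $b_n=1$, $y_n=2$, and $a_{[n-1]}\notin\{b_{[n-1]},x_{[n-1]},y_{[n-1]}\}$; $t_2(n)$: $a_n=b_n=0$, $x_n=1$, $y_n=2$,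 and $a_{[n-1]}\notin\{b_{[n-1]},x_{[n-1]},y_{[n-1]}\}$; $t_3(n)$: $a_n=x_n=0$ and $b_n=y_n=1$; $t_4(n)$: $a_n=0$, $b_n=x_n=1$, $y_n=2$, and $b_{[n-1]}\notin\{a_{[n-1]},x_{[n-1]},y_{[n-1]}\}$; $t_5(n)$: $a_n=b_n=0$, $x_n=1$, $y_n=2$, and $b_{[n-1]}\notin\{a_{[n-1]},x_{[n-1]},y_{[n-1]}\}$; $\varphi_1$: the $t_1(n)$ conditions hold and there is $i\in[n-1]$ with $b_i\in\{a_i,x_i,y_i\}$; $\varphi_2$: the $t_2(n)$ or the $t_5(n)$ conditions hold and there are two distinct $i,i'\in[n-1]$, $u\in\{a,b\}$, $w\in\{x,y\}$ with $u_i=w_i$ and $u_{i'}=w_{i'}$; $\varphi_3$: the $t_3(n)$ conditions hold and there is $i\in[n-1]$ with $a_i=y_i$ or $b_i=x_i$; $\varphi_4$: the $t_4(n)$ conditions hold and there is $i\in[n-1]$ with $a_i\in\{b_i,x_i,y_i\}$. *)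

theory Defs
  imports Main "HOL-Combinatorics.Permutations"
begin

(* Vertices of Q^3_n: lists of length n over {0,1,2}.
   Paper coordinate v_i (i in [n], 1-indexed) is  v ! (i - 1);  v_[k] is take k v. *)
definition verts :: "nat \<Rightarrow> nat list set" where
  "verts n = {v. length v = n \<and> set v \<subseteq> {0,1,2}}"

definition is_edge :: "nat \<Rightarrow> nat list \<Rightarrow> nat list \<Rightarrow> nat list \<Rightarrow> bool" where
  "is_edge n u v w \<longleftrightarrow> u \<in> verts n \<and> v \<in> verts n \<and> w \<in> verts n \<and>
     u \<noteq> v \<and> v \<noteq> w \<and> u \<noteq> w \<and>
     (\<exists>i<n. \<forall>j<n. j \<noteq> i \<longrightarrow> u ! j = v ! j \<and> v ! j = w ! j)"

definition loose_path :: "nat \<Rightarrow> nat list list \<Rightarrow> bool" where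
  "loose_path n p \<longleftrightarrow> odd (length p) \<and> distinct p \<and>
     (\<forall>i < length p div 2. is_edge n (p ! (2*i)) (p ! (2*i+1)) (p ! (2*i+2))) \<and>
     (\<forall>i < length p div 2. \<forall>k < length p div 2. i \<noteq> k \<longrightarrow>
        {p ! (2*i), p ! (2*i+1), p ! (2*i+2)} \<noteq> {p ! (2*k), p ! (2*k+1), p ! (2*k+2)})"

definition is_config :: "nat \<Rightarrow> nat list \<times> nat list \<times> nat list \<times> nat list \<Rightarrow> bool" where
  "is_config n c = (case c of (a,b,x,y) \<Rightarrow>
     a \<in> verts n \<and> b \<in> verts n \<and> x \<in> verts n \<and> y \<in> verts n \<and>
     distinct [a,b,x,y])"

definition covered :: "nat \<Rightarrow> nat list \<times> nat list \<times> nat list \<times> nat list \<Rightarrow> bool" where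
  "covered n c = (case c of (a,b,x,y) \<Rightarrow>
     \<exists>p. loose_path n p \<and> hd p = a \<and> last p = b \<and> set p = verts n - {x,y})"

definition is_symmetry :: "nat \<Rightarrow> (nat list \<Rightarrow> nat list) \<Rightarrow> bool" where
  "is_symmetry n f \<longleftrightarrow> (\<exists>\<sigma> \<pi>. \<sigma> permutes {..<n} \<and> (\<forall>j<n. \<pi> j permutes {0,1,2::nat}) \<and>
      (\<forall>v \<in> verts n. f v = map (\<lambda>j. \<pi> j (v ! \<sigma> j)) [0..<n]))"

type_synonym cond = "nat \<Rightarrow> nat list \<Rightarrow> nat list \<Rightarrow> nat list \<Rightarrow> nat list \<Rightarrow> bool"

definition of_type :: "cond \<Rightarrow> nat \<Rightarrow> nat list \<times> nat list \<times> nat list \<times> nat list \<Rightarrow> bool" where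
  "of_type P n c = (case c of (a,b,x,y) \<Rightarrow>
     \<exists>f. is_symmetry n f \<and> (P n (f a) (f b) (f x) (f y) \<or> P n (f a) (f b) (f y) (f x)))"

definition t1 :: cond where
  "t1 n a b x y \<longleftrightarrow> a!(n-1) = 0 \<and> x!(n-1) = 0 \<and> b!(n-1) = 1 \<and> y!(n-1) = 2 \<and>
     take (n-1) a \<notin> {take (n-1) b, take (n-1) x, take (n-1) y}"

definition t2 :: cond where
  "t2 n a b x y \<longleftrightarrow> a!(n-1) = 0 \<and> b!(n-1) = 0 \<and> x!(n-1) = 1 \<and> y!(n-1) = 2 \<and>
     take (n-1) a \<notin> {take (n-1) b, take (n-1) x, take (n-1) y}"

definition t3 :: cond where
  "t3 n a b x y \<longleftrightarrow> a!(n-1) = 0 \<and> x!(n-1) = 0 \<and> b!(n-1) = 1 \<and> y!(n-1) = 1"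

definition t4 :: cond where
  "t4 n a b x y \<longleftrightarrow> a!(n-1) = 0 \<and> b!(n-1) = 1 \<and> x!(n-1) = 1 \<and> y!(n-1) = 2 \<and>
     take (n-1) b \<notin> {take (n-1) a, take (n-1) x, take (n-1) y}"

definition t5 :: cond where
  "t5 n a b x y \<longleftrightarrow> a!(n-1) = 0 \<and> b!(n-1) = 0 \<and> x!(n-1) = 1 \<and> y!(n-1) = 2 \<and>
     take (n-1) b \<notin> {take (n-1) a, take (n-1) x, take (n-1) y}"

(* i ranges over [n-1] = {1..n-1}, i.e. 0-based index j < n-1 *)
definition phi1 :: cond where
  "phi1 n a b x y \<longleftrightarrow> t1 n a b x y \<and> (\<exists>j < n-1. b!j \<in> {a!j, x!j, y!j})"

definition phi2 :: cond where
  "phi2 n a b x y \<longleftrightarrow> (t2 n a b x y \<or> t5 n a b x y) \<and>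
     (\<exists>j < n-1. \<exists>j' < n-1. j \<noteq> j' \<and> (\<exists>u \<in> {a,b}. \<exists>w \<in> {x,y}. u!j = w!j \<and> u!j' = w!j'))"

definition phi3 :: cond where
  "phi3 n a b x y \<longleftrightarrow> t3 n a b x y \<and> (\<exists>j < n-1. a!j = y!j \<or> b!j = x!j)"

definition phi4 :: cond where
  "phi4 n a b x y \<longleftrightarrow> t4 n a b x y \<and> (\<exists>j < n-1. a!j \<in> {b!j, x!j, y!j})"

end

theory Submission
  imports Defs
begin

fun chain :: "nat \<Rightarrow> nat list list \<Rightarrow> bool" where
  "chain n [] = False"
| "chain n [v] = True"
| "chain n [u,w] = False"
| "chain n (u#w#v#rest) = (is_edge n u w v \<and> chain n (v#rest))"

lemma chain_edges:
  "chain n p \<longleftrightarrow> odd (length p) \<and>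
     (\<forall>i < length p div 2. is_edge n (p ! (2*i)) (p ! (2*i+1)) (p ! (2*i+2)))"
proof (induction n p rule: chain.induct)
  case (4 n u w v rest)
  have l: "length (u#w#v#rest) div 2 = Suc (length (v#rest) div 2)" by simp
  have o: "odd (length (u#w#v#rest)) = odd (length (v#rest))" by simp
  show ?case
    unfolding l All_less_Suc2 o using 4 by (auto simp add: numeral_2_eq_2)
qed auto

lemma distinct_edges:
  assumes "distinct p" "odd (length p)"
  shows "\<forall>i < length p div 2. \<forall>k < length p div 2. i \<noteq> k \<longrightarrow>
        {p ! (2*i), p ! (2*i+1), p ! (2*i+2)} \<noteq> {p ! (2*k), p ! (2*k+1), p ! (2*k+2)}"
proof (intro allI impI notI)
  fix i k assume ik: "i < length p div 2" "k < length p div 2" "i \<noteq> k"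
  assume eq: "{p ! (2*i), p ! (2*i+1), p ! (2*i+2)} = {p ! (2*k), p ! (2*k+1), p ! (2*k+2)}"
  have L: "2*i+2 < length p" "2*k+2 < length p" using ik assms(2) by (auto elim!: oddE)
  have "p ! (2*i+1) \<in> {p ! (2*k), p ! (2*k+1), p ! (2*k+2)}" using eq by blast
  then have "2*i+1 = 2*k \<or> 2*i+1 = 2*k+1 \<or> 2*i+1 = 2*k+2"
    using L assms(1) by (auto simp: nth_eq_iff_index_eq)
  then show False using ik by presburger
qed

lemma lp_iff: "loose_path n p \<longleftrightarrow> chain n p \<and> distinct p"
  unfolding loose_path_def chain_edges using distinct_edges by blast

lemma chain_ne: "chain n p \<Longrightarrow> p \<noteq> []"
  by (cases p) auto

lemma chain_join:
  "chain n p1 \<Longrightarrow> chain n p2 \<Longrightarrow> is_edge n (last p1) w (hd p2) \<Longrightarrow> chain n (p1 @ w # p2)"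
proof (induction n p1 rule: chain.induct)
  case (2 n v)
  then obtain h t where "p2 = h # t" by (cases p2) auto
  with 2 show ?case by simp
qed auto

lemma is_edge_sym: assumes "is_edge n u w v" shows "is_edge n v w u"
proof -
  obtain i where "i < n" "\<forall>j<n. j \<noteq> i \<longrightarrow> u ! j = w ! j \<and> w ! j = v ! j"
    "u \<in> verts n" "w \<in> verts n" "v \<in> verts n" "u \<noteq> w" "w \<noteq> v" "u \<noteq> v"
    using assms unfolding is_edge_def by blast
  then show ?thesis unfolding is_edge_def by (intro conjI exI[of _ i]) auto
qed

lemma chain_rev: "chain n p \<Longrightarrow> chain n (rev p)"
proof (induction n p rule: chain.induct)
  case (4 n u w v rest)
  then have c: "chain n (rev rest @ [v])" and e: "is_edge n u w v" by auto
  have "chain n ((rev rest @ [v]) @ w # [u])"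
    by (rule chain_join[OF c]) (use e is_edge_sym in auto)
  then show ?case by simp
qed auto

lemma chain_map:
  "chain n p \<Longrightarrow> (\<And>u w v. u \<in> set p \<Longrightarrow> w \<in> set p \<Longrightarrow> v \<in> set p \<Longrightarrow> is_edge n u w v \<Longrightarrow> is_edge n' (h u) (h w) (h v))
   \<Longrightarrow> chain n' (map h p)"
proof (induction n p rule: chain.induct)
  case (4 n u w v rest)
  have "is_edge n' (h u) (h w) (h v)" using 4 by simp
  moreover have "chain n' (map h (v#rest))" using 4 by (intro 4(1)) auto
  ultimately show ?case by simp
qed auto

lemma verts_snoc[simp]: "V @ [k] \<in> verts (Suc m) \<longleftrightarrow> V \<in> verts m \<and> k \<in> {0,1,2}"
  unfolding verts_def by auto

lemma verts_length: "v \<in> verts m \<Longrightarrow> length v = m"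
  unfolding verts_def by auto

lemma edge_lift:
  assumes "is_edge m u w v" "k \<in> {0,1,2::nat}"
  shows "is_edge (Suc m) (u@[k]) (w@[k]) (v@[k])"
proof -
  from assms(1) obtain i where i: "i < m" and ag: "\<forall>j<m. j \<noteq> i \<longrightarrow> u ! j = w ! j \<and> w ! j = v ! j"
    and vs: "u \<in> verts m" "w \<in> verts m" "v \<in> verts m" and ds: "u \<noteq> w" "w \<noteq> v" "u \<noteq> v"
    unfolding is_edge_def by blast
  have L: "length u = m" "length w = m" "length v = m" using vs verts_length by auto
  show ?thesis unfolding is_edge_def
  proof (intro conjI)
    show "\<exists>i<Suc m. \<forall>j<Suc m. j \<noteq> i \<longrightarrow> (u @ [k]) ! j = (w @ [k]) ! j \<and> (w @ [k]) ! j = (v @ [k]) ! j"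
      using i ag L by (intro exI[of _ i]) (auto simp: nth_append less_Suc_eq)
  qed (use vs ds assms(2) in auto)
qed

lemma edge_vert:
  assumes "u \<in> verts m" "p \<in> {0,1,2::nat}" "q \<in> {0,1,2::nat}" "r \<in> {0,1,2::nat}" "p \<noteq> q" "q \<noteq> r" "p \<noteq> r"
  shows "is_edge (Suc m) (u@[p]) (u@[q]) (u@[r])"
proof -
  have L: "length u = m" using assms verts_length by auto
  show ?thesis unfolding is_edge_def
    using assms L by (intro conjI exI[of _ m]) (auto simp: nth_append)
qed

definition lift :: "nat \<Rightarrow> nat list list \<Rightarrow> nat list list" where
  "lift k p = map (\<lambda>v. v @ [k]) p"

lemma chain_lift: "chain m p \<Longrightarrow> set p \<subseteq> verts m \<Longrightarrow> k \<in> {0,1,2} \<Longrightarrow> chain (Suc m) (lift k p)"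
  unfolding lift_def by (erule chain_map) (auto intro: edge_lift)

lemma lift_simps[simp]: "p \<noteq> [] \<Longrightarrow> hd (lift k p) = hd p @ [k]"
  "p \<noteq> [] \<Longrightarrow> last (lift k p) = last p @ [k]"
  "lift k p \<noteq> [] \<longleftrightarrow> p \<noteq> []"
  "distinct (lift k p) \<longleftrightarrow> distinct p"
  "set (lift k p) = (\<lambda>v. v @ [k]) ` set p"
  unfolding lift_def by (auto simp: hd_map last_map distinct_map inj_on_def)

lemma snoc_in_lift_img[simp]: "V @ [k] \<in> (\<lambda>v. v @ [j]) ` S \<longleftrightarrow> k = j \<and> V \<in> S"
  by auto

lemma covered_rev: "covered n (a,b,x,y) \<Longrightarrow> covered n (b,a,x,y)"
proof -
  assume "covered n (a,b,x,y)"
  then obtain p where "chain n p" "distinct p" "hd p = a" "last p = b" "set p = verts n - {x,y}"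
    unfolding covered_def lp_iff by auto
  then show ?thesis unfolding covered_def lp_iff prod.case
    by (intro exI[of _ "rev p"]) (auto simp: chain_rev hd_rev last_rev dest: chain_ne)
qed

lemma covered_swap: "covered n (a,b,x,y) \<Longrightarrow> covered n (a,b,y,x)"
  unfolding covered_def by (simp add: insert_commute)

lemma coveredI: "chain n p \<Longrightarrow> distinct p \<Longrightarrow> hd p = a \<Longrightarrow> last p = b \<Longrightarrow> set p = verts n - {x,y}
   \<Longrightarrow> covered n (a,b,x,y)"
  unfolding covered_def lp_iff by blast

lemma finite_verts: "finite (verts n)"
proof -
  have "verts n \<subseteq> {xs. set xs \<subseteq> {0,1,2} \<and> length xs = n}" unfolding verts_def by blast
  then show ?thesis using finite_lists_length_eq[of "{0,1,2::nat}" n] finite_subset by blast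
qed

lemma verts_nth: assumes "v \<in> verts n" "j < n" shows "v ! j \<in> {0,1,2}"
proof -
  have "length v = n" "set v \<subseteq> {0,1,2}" using assms(1) unfolding verts_def by auto
  moreover have "v ! j \<in> set v" using assms(2) calculation(1) by (intro nth_mem) simp
  ultimately show ?thesis by blast
qed

lemma sym_facts:
  assumes "is_symmetry n f"
  obtains \<sigma> \<pi> where "\<sigma> permutes {..<n}" "\<And>j. j < n \<Longrightarrow> \<pi> j permutes {0,1,2::nat}"
    "\<And>v. v \<in> verts n \<Longrightarrow> f v = map (\<lambda>j. \<pi> j (v ! \<sigma> j)) [0..<n]"
  using assms unfolding is_symmetry_def by blast

lemma sym_verts:
  assumes "is_symmetry n f" "v \<in> verts n" shows "f v \<in> verts n"
proof -
  obtain \<sigma> \<pi> where s: "\<sigma> permutes {..<n}" and p: "\<And>j. j < n \<Longrightarrow> \<pi> j permutes {0,1,2::nat}"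
    and f: "\<And>v. v \<in> verts n \<Longrightarrow> f v = map (\<lambda>j. \<pi> j (v ! \<sigma> j)) [0..<n]"
    using sym_facts[OF assms(1)] by blast
  have el: "\<pi> j (v ! \<sigma> j) \<in> {0,1,2}" if j: "j < n" for j
  proof -
    have "\<sigma> j \<in> {..<n}" using permutes_in_image[OF s, of j] j by simp
    then have "v ! \<sigma> j \<in> {0,1,2}" using verts_nth assms(2) by simp
    then show ?thesis using permutes_in_image[OF p[OF j], of "v ! \<sigma> j"] by simp
  qed
  have len: "length (f v) = n" using f[OF assms(2)] by simp
  have "set (f v) \<subseteq> {0,1,2}"
  proof
    fix z assume "z \<in> set (f v)"
    then obtain j where "j < length (f v)" "z = f v ! j" by (auto simp: in_set_conv_nth)
    then show "z \<in> {0,1,2}" using el len f[OF assms(2)] by simp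
  qed
  then show ?thesis using len unfolding verts_def by simp
qed

lemma sym_nth_eq:
  assumes "is_symmetry n f" "u \<in> verts n" "w \<in> verts n"
  obtains \<sigma> where "\<sigma> permutes {..<n}"
    "\<And>j. j < n \<Longrightarrow> (f u ! j = f w ! j) \<longleftrightarrow> (u ! \<sigma> j = w ! \<sigma> j)"
proof -
  obtain \<sigma> \<pi> where s: "\<sigma> permutes {..<n}" and p: "\<And>j. j < n \<Longrightarrow> \<pi> j permutes {0,1,2::nat}"
    and f: "\<And>v. v \<in> verts n \<Longrightarrow> f v = map (\<lambda>j. \<pi> j (v ! \<sigma> j)) [0..<n]"
    using sym_facts[OF assms(1)] by blast
  have "\<And>j. j < n \<Longrightarrow> (f u ! j = f w ! j) \<longleftrightarrow> (u ! \<sigma> j = w ! \<sigma> j)"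
  proof -
    fix j assume j: "j < n"
    have "inj (\<pi> j)" using p[OF j] permutes_inj by blast
    then show "(f u ! j = f w ! j) \<longleftrightarrow> (u ! \<sigma> j = w ! \<sigma> j)"
      using f[OF assms(2)] f[OF assms(3)] j by (auto simp: inj_eq)
  qed
  then show ?thesis using s that by blast
qed

lemma perm_surj: "\<sigma> permutes {..<n} \<Longrightarrow> k < n \<Longrightarrow> \<exists>j<n. \<sigma> j = k"
  by (metis lessThan_iff permutes_inverses(1) permutes_in_image permutes_inv)

lemma sym_inj:
  assumes "is_symmetry n f" "u \<in> verts n" "w \<in> verts n" "f u = f w" shows "u = w"
proof -
  obtain \<sigma> where s: "\<sigma> permutes {..<n}"
    and e: "\<And>j. j < n \<Longrightarrow> (f u ! j = f w ! j) \<longleftrightarrow> (u ! \<sigma> j = w ! \<sigma> j)"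
    using sym_nth_eq[OF assms(1-3)] by blast
  show ?thesis
  proof (rule nth_equalityI)
    show "length u = length w" using assms verts_length by auto
    fix k assume "k < length u"
    then have k: "k < n" using assms verts_length by auto
    obtain j where "j < n" "\<sigma> j = k" using perm_surj[OF s k] by blast
    then show "u ! k = w ! k" using e assms(4) by metis
  qed
qed

lemma sym_edge_reflect:
  assumes "is_symmetry n f" "u \<in> verts n" "w \<in> verts n" "v \<in> verts n"
    and "is_edge n (f u) (f w) (f v)"
  shows "is_edge n u w v"
proof -
  obtain \<sigma> \<pi> where s: "\<sigma> permutes {..<n}" and p: "\<And>j. j < n \<Longrightarrow> \<pi> j permutes {0,1,2::nat}"
    and f: "\<And>v. v \<in> verts n \<Longrightarrow> f v = map (\<lambda>j. \<pi> j (v ! \<sigma> j)) [0..<n]"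
    using sym_facts[OF assms(1)] by blast
  obtain i where i: "i < n" and ag: "\<forall>j<n. j \<noteq> i \<longrightarrow> f u ! j = f w ! j \<and> f w ! j = f v ! j"
    and d: "f u \<noteq> f w" "f w \<noteq> f v" "f u \<noteq> f v"
    using assms(5) unfolding is_edge_def by blast
  have inj: "\<And>j. j < n \<Longrightarrow> inj (\<pi> j)" using p permutes_inj by blast
  have ag2: "\<forall>k<n. k \<noteq> \<sigma> i \<longrightarrow> u ! k = w ! k \<and> w ! k = v ! k"
  proof (intro allI impI)
    fix k assume k: "k < n" "k \<noteq> \<sigma> i"
    obtain j where j: "j < n" "\<sigma> j = k" using perm_surj[OF s k(1)] by blast
    then have "j \<noteq> i" using k by blast
    then have "f u ! j = f w ! j \<and> f w ! j = f v ! j" using ag j by blast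
    then show "u ! k = w ! k \<and> w ! k = v ! k"
      using f[OF assms(2)] f[OF assms(3)] f[OF assms(4)] j inj[OF j(1)] by (auto simp: inj_eq)
  qed
  have "\<sigma> i < n" using s i permutes_in_image by fastforce
  then show ?thesis unfolding is_edge_def using assms(2-4) d ag2 by blast
qed

lemma sym_covered:
  assumes S: "is_symmetry n f" and vs: "a \<in> verts n" "b \<in> verts n" "x \<in> verts n" "y \<in> verts n"
    and c: "covered n (f a, f b, f x, f y)"
  shows "covered n (a, b, x, y)"
proof -
  obtain p where lp: "loose_path n p" and h: "hd p = f a" and l: "last p = f b"
    and st: "set p = verts n - {f x, f y}"
    using c unfolding covered_def by blast
  have ch: "chain n p" and dp: "distinct p" using lp lp_iff by auto
  have img: "f ` verts n = verts n"
    by (rule endo_inj_surj[OF finite_verts]) (use S sym_verts sym_inj in \<open>auto simp: inj_on_def\<close>)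
  define g where "g = inv_into (verts n) f"
  have fg: "\<And>w. w \<in> verts n \<Longrightarrow> f (g w) = w" unfolding g_def using img by (simp add: f_inv_into_f)
  have gv: "\<And>w. w \<in> verts n \<Longrightarrow> g w \<in> verts n" unfolding g_def using img by (metis inv_into_into)
  have gf: "\<And>v. v \<in> verts n \<Longrightarrow> g (f v) = v" unfolding g_def
    using S sym_inj by (meson inj_onI inv_into_f_f)
  have sp: "set p \<subseteq> verts n" using st by auto
  have ne: "p \<noteq> []" using ch chain_ne by blast
  show ?thesis
  proof (rule coveredI[of n "map g p"])
    show "chain n (map g p)"
    proof (rule chain_map[OF ch])
      fix u w v assume "u \<in> set p" "w \<in> set p" "v \<in> set p" "is_edge n u w v"
      then show "is_edge n (g u) (g w) (g v)"
        using sym_edge_reflect[OF S gv gv gv] sp fg by (metis subsetD)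
    qed
    show "distinct (map g p)" using dp sp
      by (simp add: distinct_map) (metis fg inj_on_def subsetD)
    show "hd (map g p) = a" using ne h gf vs by (simp add: hd_map)
    show "last (map g p) = b" using ne l gf vs by (simp add: last_map)
    show "set (map g p) = verts n - {x, y}"
    proof
      show "set (map g p) \<subseteq> verts n - {x, y}"
        using st gv fg by auto
      show "verts n - {x, y} \<subseteq> set (map g p)"
      proof
        fix v assume v: "v \<in> verts n - {x, y}"
        then have "f v \<in> set p" using st sym_verts[OF S] sym_inj[OF S] vs by auto
        then show "v \<in> set (map g p)" using gf v by force
      qed
    qed
  qed
qed

definition rho :: "nat \<Rightarrow> nat \<Rightarrow> nat \<Rightarrow> nat" where
  "rho p q v = (if v = p then 0 else if v = q then 1 else if v \<le> 2 then 2 else v)"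

lemma rho_permutes:
  assumes "p \<in> {0,1,2}" "q \<in> {0,1,2}" "p \<noteq> q"
  shows "rho p q permutes {0,1,2}"
proof (rule bij_imp_permutes)
  have "p = 0 \<or> p = 1 \<or> p = 2" "q = 0 \<or> q = 1 \<or> q = 2" using assms by auto
  then show "bij_betw (rho p q) {0, 1, 2} {0, 1, 2}"
    using assms(3) by (elim disjE) (simp_all add: bij_betw_def inj_on_def rho_def insert_commute)
  show "\<And>x. x \<notin> {0, 1, 2} \<Longrightarrow> rho p q x = x"
    using assms by (auto simp: rho_def)
qed

lemma rho_vals: "rho p q p = 0" "p \<noteq> q \<Longrightarrow> rho p q q = 1"
  "r \<in> {0,1,2} \<Longrightarrow> r \<noteq> p \<Longrightarrow> r \<noteq> q \<Longrightarrow> rho p q r = 2"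
  by (auto simp: rho_def)

definition fsym :: "nat \<Rightarrow> nat \<Rightarrow> (nat \<Rightarrow> nat) \<Rightarrow> nat list \<Rightarrow> nat list" where
  "fsym n i \<rho> v = map (\<lambda>j. (if j = n - 1 then \<rho> else id) (v ! transpose i (n-1) j)) [0..<n]"

lemma fsym_is_symmetry:
  assumes "i < n" "\<rho> permutes {0,1,2}"
  shows "is_symmetry n (fsym n i \<rho>)"
  unfolding is_symmetry_def
proof (intro exI conjI)
  show "transpose i (n-1) permutes {..<n}" using assms by (intro permutes_swap_id) auto
  show "\<forall>j<n. (\<lambda>j. if j = n - 1 then \<rho> else id) j permutes {0,1,2}" using assms by auto
  show "\<forall>v\<in>verts n. fsym n i \<rho> v = map (\<lambda>j. (\<lambda>j. if j = n - 1 then \<rho> else id) j (v ! transpose i (n - 1) j)) [0..<n]"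
    unfolding fsym_def by simp
qed

lemma fsym_last: "i < n \<Longrightarrow> fsym n i \<rho> v ! (n-1) = \<rho> (v ! i)"
  unfolding fsym_def by simp

lemma fsym_other:
  assumes "i < n" "j0 < n" "j0 \<noteq> i"
  shows "\<exists>j < n-1. \<forall>v. fsym n i \<rho> v ! j = v ! j0"
proof (cases "j0 = n - 1")
  case True
  then have "i < n - 1" using assms by auto
  then show ?thesis using True unfolding fsym_def by (intro exI[of _ i]) auto
next
  case False
  then have "j0 < n - 1" using assms by auto
  then show ?thesis using False assms unfolding fsym_def
    by (intro exI[of _ j0]) (auto simp: transpose_apply_other)
qed

definition P3 :: "nat \<Rightarrow> nat list \<Rightarrow> nat list \<Rightarrow> nat list \<Rightarrow> nat list \<Rightarrow> bool" where
  "P3 n s t e w \<longleftrightarrow> (\<exists>i<n. s!i = e!i \<and> t!i = w!i \<and> s!i \<noteq> t!i \<and>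
      (\<exists>j<n. j \<noteq> i \<and> (s!j = w!j \<or> t!j = e!j)))"

lemma phi3_intro:
  assumes vs: "s \<in> verts n" "t \<in> verts n" and P: "P3 n s t e w"
  shows "\<exists>f. is_symmetry n f \<and> phi3 n (f s) (f t) (f e) (f w)"
proof -
  obtain i j0 where i: "i < n" and h: "s!i = e!i" "t!i = w!i" "s!i \<noteq> t!i"
    and j0: "j0 < n" "j0 \<noteq> i" "s!j0 = w!j0 \<or> t!j0 = e!j0"
    using P unfolding P3_def by blast
  define \<rho> where "\<rho> = rho (s!i) (t!i)"
  have rp: "\<rho> permutes {0,1,2}" unfolding \<rho>_def
    using rho_permutes verts_nth vs i h by blast
  obtain j where j: "j < n-1" "\<forall>v. fsym n i \<rho> v ! j = v ! j0" using fsym_other[OF i j0(1,2)] by blast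
  show ?thesis
  proof (intro exI conjI)
    show "is_symmetry n (fsym n i \<rho>)" using fsym_is_symmetry[OF i rp] .
    show "phi3 n (fsym n i \<rho> s) (fsym n i \<rho> t) (fsym n i \<rho> e) (fsym n i \<rho> w)"
      unfolding phi3_def t3_def using fsym_last[OF i] h j j0(3)
      by (auto simp: \<rho>_def rho_vals)
  qed
qed

lemma of_type_phi3:
  assumes "s \<in> verts n" "t \<in> verts n" "P3 n s t e w \<or> P3 n s t w e"
  shows "of_type phi3 n (s,t,e,w)"
proof -
  have "\<exists>f. is_symmetry n f \<and> (phi3 n (f s) (f t) (f e) (f w) \<or> phi3 n (f s) (f t) (f w) (f e))"
    using assms phi3_intro by blast
  then show ?thesis unfolding of_type_def by simp
qed

definition P4 :: "nat \<Rightarrow> nat list \<Rightarrow> nat list \<Rightarrow> nat list \<Rightarrow> nat list \<Rightarrow> bool" where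
  "P4 n a b x y \<longleftrightarrow> (\<exists>i<n. b!i = x!i \<and> a!i \<noteq> b!i \<and> a!i \<noteq> y!i \<and> b!i \<noteq> y!i \<and>
      (\<forall>u\<in>{a,x,y}. \<exists>j<n. j \<noteq> i \<and> b!j \<noteq> u!j) \<and>
      (\<exists>j<n. j \<noteq> i \<and> (a!j = b!j \<or> a!j = x!j \<or> a!j = y!j)))"

lemma take_neq:
  assumes "j < k" "u ! j \<noteq> w ! j" shows "take k u \<noteq> take k w"
proof
  assume "take k u = take k w"
  then have "take k u ! j = take k w ! j" by simp
  then show False using assms by simp
qed

lemma phi4_intro:
  assumes vs: "a \<in> verts n" "b \<in> verts n" "y \<in> verts n" and P: "P4 n a b x y"
  shows "\<exists>f. is_symmetry n f \<and> phi4 n (f a) (f b) (f x) (f y)"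
proof -
  obtain i where i: "i < n" and h: "b!i = x!i" "a!i \<noteq> b!i" "a!i \<noteq> y!i" "b!i \<noteq> y!i"
    and pr: "\<forall>u\<in>{a,x,y}. \<exists>j<n. j \<noteq> i \<and> b!j \<noteq> u!j"
    and jj: "\<exists>j<n. j \<noteq> i \<and> (a!j = b!j \<or> a!j = x!j \<or> a!j = y!j)"
    using P unfolding P4_def by blast
  define \<rho> where "\<rho> = rho (a!i) (b!i)"
  have rp: "\<rho> permutes {0,1,2}" unfolding \<rho>_def
    using rho_permutes verts_nth vs i h by blast
  have y2: "\<rho> (y!i) = 2" unfolding \<rho>_def using h verts_nth[OF vs(3) i] by (simp add: rho_vals)
  define f where "f = fsym n i \<rho>"
  have tk: "take (n-1) (f b) \<noteq> take (n-1) (f u)" if "u \<in> {a,x,y}" for u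
  proof -
    have "\<exists>j<n. j \<noteq> i \<and> b!j \<noteq> u!j" using bspec[OF pr that] .
    then obtain j0 where "j0 < n" "j0 \<noteq> i" "b!j0 \<noteq> u!j0" by blast
    moreover obtain j where "j < n-1" "\<forall>v. f v ! j = v ! j0"
      using fsym_other[OF i \<open>j0 < n\<close> \<open>j0 \<noteq> i\<close>] unfolding f_def by blast
    ultimately have "j < n - 1" "f b ! j \<noteq> f u ! j" by auto
    then show ?thesis by (rule take_neq)
  qed
  obtain j0 where j0: "j0 < n" "j0 \<noteq> i" "a!j0 = b!j0 \<or> a!j0 = x!j0 \<or> a!j0 = y!j0" using jj by blast
  obtain j where j: "j < n-1" "\<forall>v. f v ! j = v ! j0"
    using fsym_other[OF i j0(1,2)] unfolding f_def by blast
  have v1: "f a ! (n-1) = 0" "f b ! (n-1) = 1" "f x ! (n-1) = 1" "f y ! (n-1) = 2"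
    unfolding f_def fsym_last[OF i] using y2 h unfolding f_def by (simp_all add: \<rho>_def rho_vals)
  have v2: "take (n-1) (f b) \<notin> {take (n-1) (f a), take (n-1) (f x), take (n-1) (f y)}"
    using tk by blast
  have v3: "\<exists>j<n-1. f a ! j \<in> {f b ! j, f x ! j, f y ! j}"
  proof (intro exI conjI)
    show "j < n - 1" using j(1) .
    show "f a ! j \<in> {f b ! j, f x ! j, f y ! j}" using j(2) j0(3) by simp
  qed
  have "phi4 n (f a) (f b) (f x) (f y)"
    unfolding phi4_def t4_def using v1 v2 v3 by blast
  moreover have "is_symmetry n f" unfolding f_def using fsym_is_symmetry[OF i rp] .
  ultimately show ?thesis by blast
qed

lemma of_type_phi4:
  assumes "a \<in> verts n" "b \<in> verts n" "x \<in> verts n" "y \<in> verts n" "P4 n a b x y \<or> P4 n a b y x"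
  shows "of_type phi4 n (a,b,x,y)"
proof -
  have "\<exists>f. is_symmetry n f \<and> (phi4 n (f a) (f b) (f x) (f y) \<or> phi4 n (f a) (f b) (f y) (f x))"
    using assms phi4_intro by blast
  then show ?thesis unfolding of_type_def by simp
qed

definition Hyp :: "nat \<Rightarrow> bool" where
  "Hyp m \<longleftrightarrow> (\<forall>c. is_config m c \<and>
           (of_type phi1 m c \<or> of_type phi2 m c \<or> of_type phi3 m c \<or> of_type phi4 m c)
           \<longrightarrow> covered m c)"

lemma coveredE:
  assumes "covered m (s,t,e,w)"
  shows "\<exists>P. chain m P \<and> distinct P \<and> hd P = s \<and> last P = t \<and> set P = verts m - {e,w}"
  using assms unfolding covered_def lp_iff by auto

lemma cov3:
  assumes "Hyp m" "s \<in> verts m" "t \<in> verts m" "e \<in> verts m" "w \<in> verts m" "distinct [s,t,e,w]"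
    "P3 m s t e w \<or> P3 m s t w e"
  shows "\<exists>P. chain m P \<and> distinct P \<and> hd P = s \<and> last P = t \<and> set P = verts m - {e,w}"
proof -
  have "covered m (s,t,e,w)" using assms of_type_phi3[of s m t e w] unfolding Hyp_def is_config_def
    by auto
  then show ?thesis by (rule coveredE)
qed

lemma cov4:
  assumes "Hyp m" "s \<in> verts m" "t \<in> verts m" "e \<in> verts m" "w \<in> verts m" "distinct [s,t,e,w]"
    "P4 m s t e w \<or> P4 m s t w e"
  shows "\<exists>P. chain m P \<and> distinct P \<and> hd P = s \<and> last P = t \<and> set P = verts m - {e,w}"
proof -
  have "covered m (s,t,e,w)" using assms of_type_phi4[of s m t e w] unfolding Hyp_def is_config_def
    by auto
  then show ?thesis by (rule coveredE)
qed

definition av2 :: "nat \<Rightarrow> nat \<Rightarrow> nat" where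
  "av2 p q = (if 0 \<noteq> p \<and> 0 \<noteq> q then 0 else if 1 \<noteq> p \<and> 1 \<noteq> q then 1 else 2)"

lemma av2: "av2 p q \<in> {0,1,2}" "av2 p q \<noteq> p" "av2 p q \<noteq> q" "p \<noteq> av2 p q" "q \<noteq> av2 p q"
  unfolding av2_def by auto

definition mk :: "nat \<Rightarrow> (nat \<Rightarrow> nat) \<Rightarrow> nat list" where
  "mk n g = map g [0..<n]"

lemma mk_nth[simp]: "k < n \<Longrightarrow> mk n g ! k = g k"
  unfolding mk_def by simp

lemma mk_verts: assumes "\<And>k. k < n \<Longrightarrow> g k \<in> {0,1,2}" shows "mk n g \<in> verts n"
proof -
  have "g ` {0..<n} \<subseteq> {0,1,2}" using assms by (intro image_subsetI) simp
  then show ?thesis unfolding mk_def verts_def by simp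
qed

lemma P3I: "i < n \<Longrightarrow> j < n \<Longrightarrow> j \<noteq> i \<Longrightarrow> s!i = e!i \<Longrightarrow> t!i = w!i \<Longrightarrow> s!i \<noteq> t!i \<Longrightarrow>
   s!j = w!j \<or> t!j = e!j \<Longrightarrow> P3 n s t e w"
  unfolding P3_def by blast

lemma neqI: "u!k \<noteq> w!k \<Longrightarrow> u \<noteq> w" by auto

lemma coord_neq: "u \<in> verts n \<Longrightarrow> w \<in> verts n \<Longrightarrow> u \<noteq> w \<Longrightarrow> \<exists>k<n. u!k \<noteq> w!k"
  by (metis nth_equalityI verts_length)

lemma two_more:
  fixes m k1 k2 :: nat
  assumes "m \<ge> 4" "k1 < m" "k2 < m"
  shows "\<exists>k3 k4. k3 < m \<and> k4 < m \<and> k3 \<noteq> k1 \<and> k3 \<noteq> k2 \<and> k4 \<noteq> k1 \<and> k4 \<noteq> k2 \<and> k3 \<noteq> k4"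
proof -
  have "\<exists>k3 k4::nat. k3 < 4 \<and> k4 < 4 \<and> k3 \<noteq> k1 \<and> k3 \<noteq> k2 \<and> k4 \<noteq> k1 \<and> k4 \<noteq> k2 \<and> k3 \<noteq> k4"
    by presburger
  then show ?thesis using assms(1) by (meson less_le_trans)
qed

lemma vals: "v \<in> verts m \<Longrightarrow> k < m \<Longrightarrow> v ! k \<in> {0,1,2}" by (rule verts_nth)

definition combok :: "nat \<Rightarrow> nat list \<Rightarrow> nat list \<Rightarrow> nat list \<Rightarrow> nat list \<Rightarrow> nat list \<Rightarrow> nat list \<Rightarrow> bool" where
  "combok m A B X Y D E \<longleftrightarrow> D \<in> verts m \<and> E \<in> verts m \<and> D \<notin> {A,B,X,Y} \<and> E \<notin> {A,B,X,Y} \<and> D \<noteq> E \<and>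
     (P3 m D E A X \<or> P3 m D E X A) \<and> (P3 m E B A D \<or> P3 m E B D A) \<and> (P3 m A D Y E \<or> P3 m A D E Y)"

lemma comb_i:
  assumes m: "m \<ge> 4" and vs: "A \<in> verts m" "B \<in> verts m" "X \<in> verts m" "Y \<in> verts m"
    and k1: "k1 < m" "A!k1 \<noteq> X!k1" and k2: "k2 < m" "k2 \<noteq> k1" "A!k2 = B!k2"
  shows "\<exists>D E. combok m A B X Y D E"
proof -
  obtain k3 k4 where k34: "k3 < m" "k4 < m" "k3 \<noteq> k1" "k3 \<noteq> k2" "k4 \<noteq> k1" "k4 \<noteq> k2" "k3 \<noteq> k4"
    using two_more[OF m k1(1) k2(1)] by blast
  define D where "D = mk m (\<lambda>k. if k = k1 then X!k else if k = k2 then av2 (A!k) (A!k)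
     else if k = k3 then (if A!k = Y!k then av2 (A!k) (A!k) else Y!k) else if k = k4 then av2 (X!k) (Y!k) else 0)"
  define E where "E = mk m (\<lambda>k. if k = k1 then A!k else if k = k2 then av2 (A!k) (A!k)
     else if k = k3 then (if A!k = Y!k then av2 (A!k) (A!k) else A!k) else if k = k4 then X!k else 0)"
  have D: "D!k1 = X!k1" "D!k2 = av2 (A!k2) (A!k2)" "D!k3 = (if A!k3 = Y!k3 then av2 (A!k3) (A!k3) else Y!k3)"
    "D!k4 = av2 (X!k4) (Y!k4)"
    using k1 k2 k34 by (simp_all add: D_def)
  have E: "E!k1 = A!k1" "E!k2 = av2 (A!k2) (A!k2)" "E!k3 = (if A!k3 = Y!k3 then av2 (A!k3) (A!k3) else A!k3)"
    "E!k4 = X!k4"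
    using k1 k2 k34 by (simp_all add: E_def)
  have DV: "D \<in> verts m" unfolding D_def
    by (rule mk_verts) (use vals[OF vs(1)] vals[OF vs(3)] vals[OF vs(4)] av2(1) in auto)
  have EV: "E \<in> verts m" unfolding E_def
    by (rule mk_verts) (use vals[OF vs(1)] vals[OF vs(3)] vals[OF vs(4)] av2(1) in auto)
  have c0: "P3 m D E X A"
    by (rule P3I[of k1 m k4]) (use k1 k34 D E in auto)
  have c1: "P3 m E B D A"
    by (rule P3I[of k2 m k1]) (use k1 k2 k34 D E av2 in auto)
  have c2: "P3 m A D Y E \<or> P3 m A D E Y"
  proof (cases "A!k3 = Y!k3")
    case True
    have "P3 m A D Y E" by (rule P3I[of k3 m k1]) (use True k1 k2 k34 D E av2 in auto)
    then show ?thesis ..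
  next
    case False
    have "P3 m A D E Y" by (rule P3I[of k3 m k2]) (use False k1 k2 k34 D E av2 in auto)
    then show ?thesis ..
  qed
  have dD: "D \<noteq> A" "D \<noteq> B" "D \<noteq> X" "D \<noteq> Y"
    using neqI[of D k1 A] neqI[of D k2 B] neqI[of D k4 X] neqI[of D k4 Y] k1 k2 D av2 by auto
  have dE: "E \<noteq> A" "E \<noteq> B" "E \<noteq> X" "E \<noteq> Y" "D \<noteq> E"
    using neqI[of E k2 A] neqI[of E k2 B] neqI[of E k1 X] neqI[of E k3 Y] neqI[of D k1 E] k1 k2 D E av2
    by auto
  show ?thesis unfolding combok_def using DV EV dD dE c0 c1 c2 by blast
qed


lemma comb_ii:
  assumes m: "m \<ge> 4" and vs: "A \<in> verts m" "B \<in> verts m" "X \<in> verts m" "Y \<in> verts m"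
    and k1: "k1 < m" "A!k1 \<noteq> X!k1" and nb: "\<forall>k<m. k \<noteq> k1 \<longrightarrow> A!k \<noteq> B!k"
    and k3: "k3 < m" "k3 \<noteq> k1" "A!k3 = Y!k3"
  shows "\<exists>D E. combok m A B X Y D E"
proof -
  obtain k2 k4 where k24: "k2 < m" "k4 < m" "k2 \<noteq> k1" "k2 \<noteq> k3" "k4 \<noteq> k1" "k4 \<noteq> k3" "k2 \<noteq> k4"
    using two_more[OF m k1(1) k3(1)] by blast
  have ab2: "A!k2 \<noteq> B!k2" using nb k24 by blast
  define D where "D = mk m (\<lambda>k. if k = k1 then X!k else if k = k2 then B!k
     else if k = k3 then av2 (A!k) (A!k) else if k = k4 then av2 (X!k) (B!k) else 0)"
  define E where "E = mk m (\<lambda>k. if k = k1 then A!k else if k = k2 then A!k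
     else if k = k3 then av2 (A!k) (A!k) else if k = k4 then X!k else 0)"
  have D: "D!k1 = X!k1" "D!k2 = B!k2" "D!k3 = av2 (A!k3) (A!k3)" "D!k4 = av2 (X!k4) (B!k4)"
    using k1 k3 k24 by (simp_all add: D_def)
  have E: "E!k1 = A!k1" "E!k2 = A!k2" "E!k3 = av2 (A!k3) (A!k3)" "E!k4 = X!k4"
    using k1 k3 k24 by (simp_all add: E_def)
  have DV: "D \<in> verts m" unfolding D_def
    by (rule mk_verts) (use vals[OF vs(1)] vals[OF vs(2)] vals[OF vs(3)] av2(1) in auto)
  have EV: "E \<in> verts m" unfolding E_def
    by (rule mk_verts) (use vals[OF vs(1)] vals[OF vs(3)] av2(1) in auto)
  have c0: "P3 m D E X A"
    by (rule P3I[of k1 m k4]) (use k1 k24 D E in auto)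
  have c1: "P3 m E B A D"
    by (rule P3I[of k2 m k3]) (use k1 k3 k24 D E ab2 in auto)
  have c2: "P3 m A D Y E"
    by (rule P3I[of k3 m k1]) (use k1 k3 k24 D E av2 in auto)
  have dD: "D \<noteq> A" "D \<noteq> B" "D \<noteq> X" "D \<noteq> Y"
    using neqI[of D k1 A] neqI[of D k4 B] neqI[of D k4 X] neqI[of D k3 Y] k1 k3 D av2 by auto
  have dE: "E \<noteq> A" "E \<noteq> B" "E \<noteq> X" "E \<noteq> Y" "D \<noteq> E"
    using neqI[of E k3 A] neqI[of E k2 B] neqI[of E k1 X] neqI[of E k3 Y] neqI[of D k1 E] k1 k3 D E av2 ab2
    by auto
  show ?thesis unfolding combok_def using DV EV dD dE c0 c1 c2 by blast
qed

lemma comb_iiia: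
  assumes m: "m \<ge> 4" and vs: "A \<in> verts m" "B \<in> verts m" "X \<in> verts m" "Y \<in> verts m"
    and k1: "k1 < m" "A!k1 \<noteq> X!k1" and nb: "\<forall>k<m. k \<noteq> k1 \<longrightarrow> A!k \<noteq> B!k"
    and ny: "\<forall>k<m. k \<noteq> k1 \<longrightarrow> A!k \<noteq> Y!k"
    and g: "g < m" "g \<noteq> k1" and v: "v \<in> {0,1,2}" "v \<noteq> B!g" "v \<noteq> X!g" "v \<noteq> Y!g"
  shows "\<exists>D E. combok m A B X Y D E"
proof -
  obtain a b where ab: "a < m" "b < m" "a \<noteq> k1" "a \<noteq> g" "b \<noteq> k1" "b \<noteq> g" "a \<noteq> b"
    using two_more[OF m k1(1) g(1)] by blast
  have abA: "A!a \<noteq> B!a" "A!b \<noteq> Y!b" using nb ny ab by blast+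
  define D where "D = mk m (\<lambda>k. if k = k1 then A!k else if k = a then B!k
     else if k = b then Y!k else if k = g then v else 0)"
  define E where "E = mk m (\<lambda>k. if k = k1 then X!k else if k = a then A!k
     else if k = b then A!k else if k = g then v else 0)"
  have D: "D!k1 = A!k1" "D!a = B!a" "D!b = Y!b" "D!g = v"
    using k1 g ab by (simp_all add: D_def)
  have E: "E!k1 = X!k1" "E!a = A!a" "E!b = A!b" "E!g = v"
    using k1 g ab by (simp_all add: E_def)
  have DV: "D \<in> verts m" unfolding D_def
    by (rule mk_verts) (use vals[OF vs(1)] vals[OF vs(2)] vals[OF vs(4)] v(1) in auto)
  have EV: "E \<in> verts m" unfolding E_def
    by (rule mk_verts) (use vals[OF vs(1)] vals[OF vs(3)] v(1) in auto)
  have c0: "P3 m D E A X"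
    by (rule P3I[of k1 m a]) (use k1 ab D E in auto)
  have c1: "P3 m E B A D"
    by (rule P3I[of a m g]) (use g ab D E abA in auto)
  have c2: "P3 m A D E Y"
    by (rule P3I[of b m g]) (use g ab D E abA in auto)
  have dD: "D \<noteq> A" "D \<noteq> B" "D \<noteq> X" "D \<noteq> Y"
    using neqI[of D a A] neqI[of D g B] neqI[of D k1 X] neqI[of D g Y] k1 D v abA by auto
  have dE: "E \<noteq> A" "E \<noteq> B" "E \<noteq> X" "E \<noteq> Y" "D \<noteq> E"
    using neqI[of E k1 A] neqI[of E a B] neqI[of E g X] neqI[of E b Y] neqI[of D k1 E] k1 D E v abA
    by auto
  show ?thesis unfolding combok_def using DV EV dD dE c0 c1 c2 by blast
qed

lemma other_coord: "m \<ge> 2 \<Longrightarrow> k1 < m \<Longrightarrow> \<exists>g<m. g \<noteq> (k1::nat)"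
  by (intro exI[of _ "if k1 = 0 then 1 else 0"]) auto

lemma comb_iiib:
  assumes m: "m \<ge> 4" and vs: "A \<in> verts m" "B \<in> verts m" "X \<in> verts m" "Y \<in> verts m"
    and k1: "k1 < m" "A!k1 \<noteq> X!k1" and nb: "\<forall>k<m. k \<noteq> k1 \<longrightarrow> A!k \<noteq> B!k"
    and ny: "\<forall>k<m. k \<noteq> k1 \<longrightarrow> A!k \<noteq> Y!k"
    and full: "\<forall>k<m. k \<noteq> k1 \<longrightarrow> B!k \<noteq> Y!k \<and> B!k \<noteq> X!k"
  shows "\<exists>D E. combok m A B X Y D E"
proof -
  obtain g where g: "g < m" "g \<noteq> k1" using other_coord[of m k1] m k1 by auto
  obtain a b where ab: "a < m" "b < m" "a \<noteq> k1" "a \<noteq> g" "b \<noteq> k1" "b \<noteq> g" "a \<noteq> b"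
    using two_more[OF m k1(1) g(1)] by blast
  have abA: "A!a \<noteq> B!a" "A!b \<noteq> Y!b" "B!b \<noteq> Y!b" "B!g \<noteq> Y!g" "B!g \<noteq> X!g"
    using nb ny full ab g by blast+
  define D where "D = mk m (\<lambda>k. if k = k1 then A!k else if k = a then B!k
     else if k = b then Y!k else if k = g then B!k else 0)"
  define E where "E = mk m (\<lambda>k. if k = k1 then X!k else if k = a then A!k
     else if k = b then A!k else if k = g then B!k else 0)"
  have D: "D!k1 = A!k1" "D!a = B!a" "D!b = Y!b" "D!g = B!g"
    using k1 g ab by (simp_all add: D_def)
  have E: "E!k1 = X!k1" "E!a = A!a" "E!b = A!b" "E!g = B!g"
    using k1 g ab by (simp_all add: E_def)
  have DV: "D \<in> verts m" unfolding D_def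
    by (rule mk_verts) (use vals[OF vs(1)] vals[OF vs(2)] vals[OF vs(4)] in auto)
  have EV: "E \<in> verts m" unfolding E_def
    by (rule mk_verts) (use vals[OF vs(1)] vals[OF vs(2)] vals[OF vs(3)] in auto)
  have c0: "P3 m D E A X"
    by (rule P3I[of k1 m a]) (use k1 ab D E in auto)
  have c1: "P3 m E B A D"
    by (rule P3I[of a m g]) (use g ab D E abA in auto)
  have c2: "P3 m A D E Y"
    by (rule P3I[of b m g]) (use g ab D E abA in auto)
  have dD: "D \<noteq> A" "D \<noteq> B" "D \<noteq> X" "D \<noteq> Y"
    using neqI[of D a A] neqI[of D b B] neqI[of D k1 X] neqI[of D g Y] k1 D abA by auto
  have dE: "E \<noteq> A" "E \<noteq> B" "E \<noteq> X" "E \<noteq> Y" "D \<noteq> E"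
    using neqI[of E k1 A] neqI[of E a B] neqI[of E g X] neqI[of E b Y] neqI[of D k1 E] k1 D E abA
    by auto
  show ?thesis unfolding combok_def using DV EV dD dE c0 c1 c2 by blast
qed

lemma comb:
  assumes m: "m \<ge> 4" and vs: "A \<in> verts m" "B \<in> verts m" "X \<in> verts m" "Y \<in> verts m"
    and ne: "A \<noteq> X"
  shows "\<exists>D E. combok m A B X Y D E"
proof -
  obtain k1 where k1: "k1 < m" "A!k1 \<noteq> X!k1" using coord_neq[OF vs(1,3) ne] by blast
  show ?thesis
  proof (cases "\<exists>k2<m. k2 \<noteq> k1 \<and> A!k2 = B!k2")
    case True
    then obtain k2 where "k2 < m" "k2 \<noteq> k1" "A!k2 = B!k2" by blast
    then show ?thesis using comb_i[OF m vs k1] by blast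
  next
    case nb: False
    show ?thesis
    proof (cases "\<exists>k3<m. k3 \<noteq> k1 \<and> A!k3 = Y!k3")
      case True
      then obtain k3 where "k3 < m" "k3 \<noteq> k1" "A!k3 = Y!k3" by blast
      then show ?thesis using comb_ii[OF m vs k1] nb by blast
    next
      case ny: False
      show ?thesis
      proof (cases "\<exists>g<m. g \<noteq> k1 \<and> (\<exists>v\<in>{0,1,2}. v \<noteq> B!g \<and> v \<noteq> X!g \<and> v \<noteq> Y!g)")
        case True
        then obtain g v where "g < m" "g \<noteq> k1" "v \<in> {0,1,2}" "v \<noteq> B!g" "v \<noteq> X!g" "v \<noteq> Y!g" by blast
        then show ?thesis using comb_iiia[OF m vs k1] nb ny by blast
      next
        case nf: False
        have full: "\<forall>k<m. k \<noteq> k1 \<longrightarrow> B!k \<noteq> Y!k \<and> B!k \<noteq> X!k"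
        proof (intro allI impI conjI)
          fix k assume k: "k < m" "k \<noteq> k1"
          show "B!k \<noteq> Y!k"
          proof
            assume "B!k = Y!k"
            then show False using nf k av2[of "B!k" "X!k"] by metis
          qed
          show "B!k \<noteq> X!k"
          proof
            assume "B!k = X!k"
            then show False using nf k av2[of "B!k" "Y!k"] by metis
          qed
        qed
        show ?thesis using comb_iiib[OF m vs k1] nb ny full by blast
      qed
    qed
  qed
qed

definition ok3 :: "nat \<Rightarrow> nat list \<Rightarrow> nat list \<Rightarrow> nat list \<Rightarrow> nat list \<Rightarrow> nat list \<Rightarrow> nat list \<Rightarrow> bool" where
  "ok3 m A B X Y P R \<longleftrightarrow> P \<in> verts m \<and> R \<in> verts m \<and> P \<notin> {A,B,X,Y} \<and> R \<notin> {A,B,X,Y} \<and> P \<noteq> R \<and>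
     (P3 m A P X R \<or> P3 m A P R X) \<and> (P3 m R B Y P \<or> P3 m R B P Y)"

lemma ch_a:
  assumes m: "m \<ge> 4" and vs: "A \<in> verts m" "B \<in> verts m" "X \<in> verts m" "Y \<in> verts m"
    and k1: "k1 < m" "A!k1 \<noteq> X!k1" and k2: "k2 < m" "k2 \<noteq> k1" "B!k2 \<noteq> Y!k2"
  shows "\<exists>P R. ok3 m A B X Y P R"
proof -
  obtain k3 k4 where k34: "k3 < m" "k4 < m" "k3 \<noteq> k1" "k3 \<noteq> k2" "k4 \<noteq> k1" "k4 \<noteq> k2" "k3 \<noteq> k4"
    using two_more[OF m k1(1) k2(1)] by blast
  define R where "R = mk m (\<lambda>k. if k = k1 then A!k else if k = k2 then Y!k
     else if k = k3 then av2 (A!k) (Y!k) else if k = k4 then av2 (X!k) (B!k) else 0)"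
  define P where "P = mk m (\<lambda>k. if k = k1 then X!k else if k = k2 then B!k
     else if k = k3 then av2 (A!k) (Y!k) else if k = k4 then av2 (X!k) (B!k) else 0)"
  have R: "R!k1 = A!k1" "R!k2 = Y!k2" "R!k3 = av2 (A!k3) (Y!k3)" "R!k4 = av2 (X!k4) (B!k4)"
    using k1 k2 k34 by (simp_all add: R_def)
  have P: "P!k1 = X!k1" "P!k2 = B!k2" "P!k3 = av2 (A!k3) (Y!k3)" "P!k4 = av2 (X!k4) (B!k4)"
    using k1 k2 k34 by (simp_all add: P_def)
  have RV: "R \<in> verts m" unfolding R_def
    by (rule mk_verts) (use vals[OF vs(1)] vals[OF vs(4)] av2(1) in auto)
  have PV: "P \<in> verts m" unfolding P_def
    by (rule mk_verts) (use vals[OF vs(2)] vals[OF vs(3)] av2(1) in auto)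
  have c0: "P3 m A P R X"
    by (rule P3I[of k1 m k3]) (use k1 k34 R P in auto)
  have c1: "P3 m R B Y P"
    by (rule P3I[of k2 m k3]) (use k2 k34 R P in auto)
  have dP: "P \<noteq> A" "P \<noteq> B" "P \<noteq> X" "P \<noteq> Y"
    using neqI[of P k1 A] neqI[of P k4 B] neqI[of P k4 X] neqI[of P k2 Y] k1 k2 P av2 by auto
  have dR: "R \<noteq> A" "R \<noteq> B" "R \<noteq> X" "R \<noteq> Y" "P \<noteq> R"
    using neqI[of R k3 A] neqI[of R k2 B] neqI[of R k1 X] neqI[of R k3 Y] neqI[of P k1 R] k1 k2 P R av2
    by auto
  show ?thesis unfolding ok3_def using PV RV dP dR c0 c1 by blast
qed

lemma ch_b:
  assumes m: "m \<ge> 4" and vs: "A \<in> verts m" "B \<in> verts m" "X \<in> verts m" "Y \<in> verts m"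
    and k1: "k1 < m" "A!k1 \<noteq> X!k1" and hby: "\<forall>k<m. k \<noteq> k1 \<longrightarrow> B!k = Y!k"
  shows "\<exists>P R. ok3 m A B X Y P R"
proof -
  obtain k2 where k2: "k2 < m" "k2 \<noteq> k1" using other_coord[of m k1] m k1 by auto
  obtain k3 k4 where k34: "k3 < m" "k4 < m" "k3 \<noteq> k1" "k3 \<noteq> k2" "k4 \<noteq> k1" "k4 \<noteq> k2" "k3 \<noteq> k4"
    using two_more[OF m k1(1) k2(1)] by blast
  have by2: "B!k2 = Y!k2" using hby k2 by blast
  define R where "R = mk m (\<lambda>k. if k = k1 then A!k else if k = k2 then av2 (B!k) (B!k)
     else if k = k3 then Y!k else if k = k4 then av2 (A!k) (X!k) else 0)"
  define P where "P = mk m (\<lambda>k. if k = k1 then X!k else if k = k2 then av2 (B!k) (B!k)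
     else if k = k3 then Y!k else if k = k4 then av2 (A!k) (X!k) else 0)"
  have R: "R!k1 = A!k1" "R!k2 = av2 (B!k2) (B!k2)" "R!k3 = Y!k3" "R!k4 = av2 (A!k4) (X!k4)"
    using k1 k2 k34 by (simp_all add: R_def)
  have P: "P!k1 = X!k1" "P!k2 = av2 (B!k2) (B!k2)" "P!k3 = Y!k3" "P!k4 = av2 (A!k4) (X!k4)"
    using k1 k2 k34 by (simp_all add: P_def)
  have RV: "R \<in> verts m" unfolding R_def
    by (rule mk_verts) (use vals[OF vs(1)] vals[OF vs(4)] av2(1) in auto)
  have PV: "P \<in> verts m" unfolding P_def
    by (rule mk_verts) (use vals[OF vs(3)] vals[OF vs(4)] av2(1) in auto)
  have c0: "P3 m A P R X"
    by (rule P3I[of k1 m k2]) (use k1 k2 R P in auto)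
  have c1: "P3 m R B P Y"
    by (rule P3I[of k2 m k3]) (use k2 k34 R P by2 av2 in auto)
  have dP: "P \<noteq> A" "P \<noteq> B" "P \<noteq> X" "P \<noteq> Y"
    using neqI[of P k1 A] neqI[of P k2 B] neqI[of P k4 X] neqI[of P k2 Y] k1 k2 P av2 by2 by auto
  have dR: "R \<noteq> A" "R \<noteq> B" "R \<noteq> X" "R \<noteq> Y" "P \<noteq> R"
    using neqI[of R k4 A] neqI[of R k2 B] neqI[of R k1 X] neqI[of R k2 Y] neqI[of P k1 R] k1 k2 P R av2 by2
    by auto
  show ?thesis unfolding ok3_def using PV RV dP dR c0 c1 by blast
qed

lemma choose3:
  assumes m: "m \<ge> 4" and vs: "A \<in> verts m" "B \<in> verts m" "X \<in> verts m" "Y \<in> verts m"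
    and ne: "A \<noteq> X"
  shows "\<exists>P R. ok3 m A B X Y P R"
proof -
  obtain k1 where k1: "k1 < m" "A!k1 \<noteq> X!k1" using coord_neq[OF vs(1,3) ne] by blast
  show ?thesis
  proof (cases "\<exists>k2<m. k2 \<noteq> k1 \<and> B!k2 \<noteq> Y!k2")
    case True
    then obtain k2 where "k2 < m" "k2 \<noteq> k1" "B!k2 \<noteq> Y!k2" by blast
    then show ?thesis using ch_a[OF m vs k1] by blast
  next
    case False
    then show ?thesis using ch_b[OF m vs k1] by blast
  qed
qed

lemma P4I:
  assumes "i < n" "j < n" "j \<noteq> i" "b!i = x!i" "a!i \<noteq> b!i" "a!i \<noteq> y!i" "b!i \<noteq> y!i"
    "b!j \<noteq> a!j" "b!j \<noteq> x!j" "b!j \<noteq> y!j" "a!j = b!j \<or> a!j = x!j \<or> a!j = y!j"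
  shows "P4 n a b x y"
proof -
  have "\<forall>u\<in>{a,x,y}. \<exists>j'<n. j' \<noteq> i \<and> b!j' \<noteq> u!j'" using assms by auto
  moreover have "\<exists>j'<n. j' \<noteq> i \<and> (a!j' = b!j' \<or> a!j' = x!j' \<or> a!j' = y!j')" using assms by auto
  ultimately show ?thesis unfolding P4_def using assms(1,4-7) by blast
qed

lemma upd_verts: "s \<in> verts m \<Longrightarrow> v \<in> {0,1,2} \<Longrightarrow> s[i := v] \<in> verts m"
  unfolding verts_def using set_update_subset_insert by fastforce

lemma hamilton:
  assumes H: "Hyp m" and m: "m \<ge> 2" and vs: "s \<in> verts m" "t \<in> verts m" and ne: "s \<noteq> t"
  shows "\<exists>P. chain m P \<and> distinct P \<and> hd P = s \<and> last P = t \<and> set P = verts m"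
proof -
  obtain c where c: "c < m" "s!c \<noteq> t!c" using coord_neq[OF vs ne] by blast
  obtain i where i: "i < m" "i \<noteq> c" using other_coord[OF m c(1)] by blast
  have ls: "length s = m" using vs verts_length by blast
  define yv where "yv = (if t!i \<noteq> s!i then t!i else av2 (s!i) (s!i))"
  define y where "y = s[i := yv]"
  define a where "a = s[i := av2 (s!i) yv]"
  have yv: "yv \<in> {0,1,2}" "yv \<noteq> s!i" unfolding yv_def using vals[OF vs(2) i(1)] av2 by auto
  have yV: "y \<in> verts m" unfolding y_def using upd_verts vs(1) yv(1) by blast
  have aV: "a \<in> verts m" unfolding a_def using upd_verts vs(1) av2(1) by blast
  have yi: "y!i = yv" "a!i = av2 (s!i) yv" unfolding y_def a_def using ls i by auto
  have yo: "\<And>k. k \<noteq> i \<Longrightarrow> y!k = s!k" "\<And>k. k \<noteq> i \<Longrightarrow> a!k = s!k" unfolding y_def a_def by auto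
  have P4: "P4 m a t s y \<or> P4 m a t y s"
  proof (cases "t!i = s!i")
    case True
    have "P4 m a t s y"
      by (rule P4I[of i m c]) (use True i c yi yo yv av2 in auto)
    then show ?thesis ..
  next
    case False
    then have "yv = t!i" unfolding yv_def by simp
    then have "P4 m a t y s"
      by (intro P4I[of i m c]) (use False i c yi yo yv av2 in auto)
    then show ?thesis ..
  qed
  have ds: "distinct [a,t,s,y]"
    using neqI[of a c t] neqI[of a i s] neqI[of a i y] neqI[of t c s] neqI[of t c y] neqI[of s i y]
      c i yi yo yv av2 by auto
  obtain P where P: "chain m P" "distinct P" "hd P = a" "last P = t" "set P = verts m - {s,y}"
    using cov4[OF H aV vs(2) vs(1) yV ds P4] by blast
  have ne: "P \<noteq> []" using P(1) chain_ne by blast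
  have e: "is_edge m s y a" unfolding is_edge_def
  proof (intro conjI)
    show "\<exists>i<m. \<forall>j<m. j \<noteq> i \<longrightarrow> s ! j = y ! j \<and> y ! j = a ! j"
      using i yo by (intro exI[of _ i]) auto
  qed (use vs yV aV ds in auto)
  have ch: "chain m ([s] @ y # P)" by (rule chain_join) (use P e in auto)
  show ?thesis
  proof (intro exI conjI)
    show "chain m (s # y # P)" using ch by simp
    show "distinct (s # y # P)" using P ds by auto
    show "hd (s # y # P) = s" by simp
    show "last (s # y # P) = t" using P ne by simp
    show "set (s # y # P) = verts m" using P vs yV by auto
  qed
qed

lemma snoc_form: "w \<in> verts (Suc m) \<Longrightarrow> \<exists>V k. w = V @ [k]"
  by (metis append_butlast_last_id list.size(3) nat.distinct(1) verts_length)

lemma set_eq_snoc: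
  assumes "\<And>w. w \<in> S \<Longrightarrow> \<exists>V k. w = V @ [k]" "\<And>w. w \<in> T \<Longrightarrow> \<exists>V k. w = V @ [k]"
    "\<And>V k. V @ [k] \<in> S \<longleftrightarrow> V @ [k] \<in> T"
  shows "S = T"
  using assms by blast

lemma distinct_join3: "distinct xs \<Longrightarrow> distinct ys \<Longrightarrow> y \<notin> set xs \<Longrightarrow> y \<notin> set ys \<Longrightarrow>
   set xs \<inter> set ys = {} \<Longrightarrow> distinct (xs @ y # ys)"
  by auto

lemma lift_disj: "p \<noteq> q \<Longrightarrow> set (lift p Q) \<inter> set (lift q Q') = {}"
  unfolding lift_def by auto

lemma lift_mem: "V @ [k] \<in> set (lift j Q) \<longleftrightarrow> k = j \<and> V \<in> set Q"
  unfolding lift_def by auto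

lemma route3:
  assumes H: "Hyp m" and m: "m \<ge> 4" and vs: "A \<in> verts m" "B \<in> verts m" "X \<in> verts m" "Y \<in> verts m"
    and ne: "A \<noteq> X" "B \<noteq> Y"
  shows "covered (Suc m) (A@[0], B@[1], X@[0], Y@[1])"
proof -
  obtain P R where ok: "ok3 m A B X Y P R" using choose3[OF m vs ne(1)] by blast
  then have PV: "P \<in> verts m" and RV: "R \<in> verts m" and dPR: "P \<notin> {A,B,X,Y}" "R \<notin> {A,B,X,Y}" "P \<noteq> R"
    and c0: "P3 m A P X R \<or> P3 m A P R X" and c1: "P3 m R B Y P \<or> P3 m R B P Y"
    unfolding ok3_def by auto
  obtain Q0 where Q0: "chain m Q0" "distinct Q0" "hd Q0 = A" "last Q0 = P" "set Q0 = verts m - {X,R}"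
    using cov3[OF H vs(1) PV vs(3) RV _ c0] dPR ne by auto
  obtain Q1 where Q1: "chain m Q1" "distinct Q1" "hd Q1 = R" "last Q1 = B" "set Q1 = verts m - {Y,P}"
    using cov3[OF H RV vs(2) vs(4) PV _ c1] dPR ne by auto
  obtain Q2 where Q2: "chain m Q2" "distinct Q2" "hd Q2 = P" "last Q2 = R" "set Q2 = verts m"
    using hamilton[OF H _ PV RV dPR(3)] m by auto
  have n0: "Q0 \<noteq> []" "Q1 \<noteq> []" "Q2 \<noteq> []" using Q0 Q1 Q2 chain_ne by blast+
  define full where "full = lift 0 Q0 @ (P@[1]) # (lift 2 Q2 @ (R@[0]) # lift 1 Q1)"
  have l0: "chain (Suc m) (lift 0 Q0)" by (rule chain_lift) (use Q0 in auto)
  have l1: "chain (Suc m) (lift 1 Q1)" by (rule chain_lift) (use Q1 in auto)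
  have l2: "chain (Suc m) (lift 2 Q2)" by (rule chain_lift) (use Q2 in auto)
  have e2: "is_edge (Suc m) (last (lift 2 Q2)) (R@[0]) (hd (lift 1 Q1))"
    using edge_vert[OF RV, of 2 0 1] Q1 Q2 n0 by simp
  have ch2: "chain (Suc m) (lift 2 Q2 @ (R@[0]) # lift 1 Q1)" by (rule chain_join[OF l2 l1 e2])
  have e0: "is_edge (Suc m) (last (lift 0 Q0)) (P@[1]) (hd (lift 2 Q2 @ (R@[0]) # lift 1 Q1))"
    using edge_vert[OF PV, of 0 1 2] Q0 Q2 n0 by simp
  have ch: "chain (Suc m) full" unfolding full_def by (rule chain_join[OF l0 ch2 e0])
  have dist: "distinct full" unfolding full_def using Q0 Q1 Q2 by auto
  have st: "set full = verts (Suc m) - {X@[0], Y@[1]}"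
  proof (rule set_eq_snoc)
    show "\<And>w. w \<in> set full \<Longrightarrow> \<exists>V k. w = V @ [k]" unfolding full_def lift_def by auto
    show "\<And>w. w \<in> verts (Suc m) - {X@[0], Y@[1]} \<Longrightarrow> \<exists>V k. w = V @ [k]" using snoc_form by blast
    fix V k
    have L: "V@[k] \<in> set full \<longleftrightarrow> (k = 0 \<and> V \<in> verts m - {X,R}) \<or> (V = P \<and> k = 1) \<or>
        (k = 2 \<and> V \<in> verts m) \<or> (V = R \<and> k = 0) \<or> (k = 1 \<and> V \<in> verts m - {Y,P})"
      unfolding full_def by (simp add: Q0(5) Q1(5) Q2(5) del: Diff_iff insert_iff) blast
    have Rr: "V@[k] \<in> verts (Suc m) - {X@[0], Y@[1]} \<longleftrightarrow>
        V \<in> verts m \<and> k \<in> {0,1,2} \<and> \<not>(V = X \<and> k = 0) \<and> \<not>(V = Y \<and> k = 1)" by simp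
    have "k = 0 \<or> k = 1 \<or> k = 2 \<or> k \<notin> {0,1,2}" by auto
    then show "V @ [k] \<in> set full \<longleftrightarrow> V @ [k] \<in> verts (Suc m) - {X@[0], Y@[1]}"
      unfolding L Rr using PV RV dPR by (elim disjE) auto
  qed
  show ?thesis
    by (rule coveredI[OF ch dist]) (use n0 Q0 Q1 st in \<open>auto simp: full_def\<close>)
qed


lemma route1:
  assumes H: "Hyp m" and m: "m \<ge> 4" and vs: "A \<in> verts m" "B \<in> verts m" "X \<in> verts m" "Y \<in> verts m"
    and ne: "A \<noteq> B" "A \<noteq> X" "A \<noteq> Y"
    and pqr: "p \<in> {0,1,2}" "q \<in> {0,1,2}" "r \<in> {0,1,2}" "p \<noteq> q" "q \<noteq> r" "p \<noteq> r"
  shows "covered (Suc m) (A@[p], B@[q], X@[p], Y@[r])"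
proof -
  obtain D E where ok: "combok m A B X Y D E" using comb[OF m vs ne(2)] by blast
  then have DV: "D \<in> verts m" and EV: "E \<in> verts m" and dDE: "D \<notin> {A,B,X,Y}" "E \<notin> {A,B,X,Y}" "D \<noteq> E"
    and c0: "P3 m D E A X \<or> P3 m D E X A" and c1: "P3 m E B A D \<or> P3 m E B D A"
    and c2: "P3 m A D Y E \<or> P3 m A D E Y"
    unfolding combok_def by auto
  have d2: "distinct [A,D,Y,E]" using dDE ne by auto
  have d0: "distinct [D,E,A,X]" using dDE ne by auto
  have d1: "distinct [E,B,A,D]" using dDE ne by auto
  obtain Q2 where Q2: "chain m Q2" "distinct Q2" "hd Q2 = A" "last Q2 = D" "set Q2 = verts m - {Y,E}"
    using cov3[OF H vs(1) DV vs(4) EV d2 c2] by blast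
  obtain Q0 where Q0: "chain m Q0" "distinct Q0" "hd Q0 = D" "last Q0 = E" "set Q0 = verts m - {A,X}"
    using cov3[OF H DV EV vs(1) vs(3) d0 c0] by blast
  obtain Q1 where Q1: "chain m Q1" "distinct Q1" "hd Q1 = E" "last Q1 = B" "set Q1 = verts m - {A,D}"
    using cov3[OF H EV vs(2) vs(1) DV d1 c1] by blast
  have n0: "Q0 \<noteq> []" "Q1 \<noteq> []" "Q2 \<noteq> []" using Q0 Q1 Q2 chain_ne by blast+
  define full where "full = [A@[p]] @ (A@[q]) # (lift r Q2 @ (D@[q]) # (lift p Q0 @ (E@[r]) # lift q Q1))"
  have l0: "chain (Suc m) (lift p Q0)" by (rule chain_lift) (use Q0 pqr in auto)
  have l1: "chain (Suc m) (lift q Q1)" by (rule chain_lift) (use Q1 pqr in auto)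
  have l2: "chain (Suc m) (lift r Q2)" by (rule chain_lift) (use Q2 pqr in auto)
  have e3: "is_edge (Suc m) (last (lift p Q0)) (E@[r]) (hd (lift q Q1))"
    using edge_vert[OF EV pqr(1,3,2)] pqr Q0 Q1 n0 by simp
  have ch3: "chain (Suc m) (lift p Q0 @ (E@[r]) # lift q Q1)" by (rule chain_join[OF l0 l1 e3])
  have e2: "is_edge (Suc m) (last (lift r Q2)) (D@[q]) (hd (lift p Q0 @ (E@[r]) # lift q Q1))"
    using edge_vert[OF DV pqr(3,2,1)] pqr Q0 Q2 n0 by simp
  have ch2: "chain (Suc m) (lift r Q2 @ (D@[q]) # (lift p Q0 @ (E@[r]) # lift q Q1))"
    by (rule chain_join[OF l2 ch3 e2])
  have e1: "is_edge (Suc m) (last [A@[p]]) (A@[q]) (hd (lift r Q2 @ (D@[q]) # (lift p Q0 @ (E@[r]) # lift q Q1)))"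
    using edge_vert[OF vs(1) pqr(1,2,3)] pqr Q2 n0 by simp
  have ch: "chain (Suc m) full" unfolding full_def by (rule chain_join[OF _ ch2 e1]) simp
  have i3: "distinct (lift p Q0 @ (E@[r]) # lift q Q1)"
    by (rule distinct_join3) (use Q0 Q1 pqr lift_disj[of p q Q0 Q1] in \<open>simp_all add: lift_mem\<close>)
  have i2: "distinct (lift r Q2 @ (D@[q]) # (lift p Q0 @ (E@[r]) # lift q Q1))"
  proof (rule distinct_join3[OF _ i3])
    show "set (lift r Q2) \<inter> set (lift p Q0 @ (E @ [r]) # lift q Q1) = {}"
      using lift_disj[of r p Q2 Q0] lift_disj[of r q Q2 Q1] Q2 pqr by (auto simp: lift_mem)
  qed (use Q0 Q1 Q2 pqr in \<open>simp_all add: lift_mem\<close>)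
  have dist: "distinct full" unfolding full_def
  proof (rule distinct_join3[OF _ i2])
    show "set [A @ [p]] \<inter> set (lift r Q2 @ (D @ [q]) # lift p Q0 @ (E @ [r]) # lift q Q1) = {}"
      using Q0 pqr dDE by (auto simp: lift_mem)
    show "A @ [q] \<notin> set (lift r Q2 @ (D @ [q]) # lift p Q0 @ (E @ [r]) # lift q Q1)"
      using Q1 pqr dDE by (auto simp: lift_mem)
  qed (use pqr in auto)
  have st: "set full = verts (Suc m) - {X@[p], Y@[r]}"
  proof (rule set_eq_snoc)
    show "\<And>w. w \<in> set full \<Longrightarrow> \<exists>V k. w = V @ [k]" unfolding full_def lift_def by auto
    show "\<And>w. w \<in> verts (Suc m) - {X@[p], Y@[r]} \<Longrightarrow> \<exists>V k. w = V @ [k]" using snoc_form by blast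
    fix V k
    have L: "V@[k] \<in> set full \<longleftrightarrow> (V = A \<and> k = p) \<or> (V = A \<and> k = q) \<or> (k = r \<and> V \<in> verts m - {Y,E}) \<or>
        (V = D \<and> k = q) \<or> (k = p \<and> V \<in> verts m - {A,X}) \<or> (V = E \<and> k = r) \<or> (k = q \<and> V \<in> verts m - {A,D})"
      unfolding full_def by (simp add: Q0(5) Q1(5) Q2(5) del: Diff_iff insert_iff) blast
    have Rr: "V@[k] \<in> verts (Suc m) - {X@[p], Y@[r]} \<longleftrightarrow>
        V \<in> verts m \<and> k \<in> {0,1,2} \<and> \<not>(V = X \<and> k = p) \<and> \<not>(V = Y \<and> k = r)" by simp
    have "k = p \<or> k = q \<or> k = r \<or> k \<notin> {0,1,2}" using pqr by auto
    then show "V @ [k] \<in> set full \<longleftrightarrow> V @ [k] \<in> verts (Suc m) - {X@[p], Y@[r]}"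
      unfolding L Rr using vs DV EV dDE ne pqr by (elim disjE) auto
  qed
  have hf: "hd full = A@[p]" by (simp add: full_def)
  have lf: "last full = B@[q]" using n0 Q1 by (simp add: full_def lift_def last_map)
  show ?thesis by (rule coveredI[OF ch dist hf lf st])
qed

lemma route2:
  assumes H: "Hyp m" and m: "m \<ge> 4" and vs: "A \<in> verts m" "B \<in> verts m" "X \<in> verts m" "Y \<in> verts m"
    and ne: "A \<noteq> B" "A \<noteq> X" "A \<noteq> Y"
    and pqr: "p \<in> {0,1,2}" "q \<in> {0,1,2}" "r \<in> {0,1,2}" "p \<noteq> q" "q \<noteq> r" "p \<noteq> r"
  shows "covered (Suc m) (A@[p], B@[p], X@[q], Y@[r])"
proof -
  obtain D E where ok: "combok m A B Y X D E" using comb[OF m vs(1,2,4,3) ne(3)] by blast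
  then have DV: "D \<in> verts m" and EV: "E \<in> verts m" and dDE: "D \<notin> {A,B,X,Y}" "E \<notin> {A,B,X,Y}" "D \<noteq> E"
    and c2: "P3 m D E Y A \<or> P3 m D E A Y" and c0: "P3 m E B A D \<or> P3 m E B D A"
    and c1: "P3 m A D X E \<or> P3 m A D E X"
    unfolding combok_def by auto
  have d1: "distinct [A,D,X,E]" using dDE ne by auto
  have d2: "distinct [D,E,Y,A]" using dDE ne by auto
  have d0: "distinct [E,B,A,D]" using dDE ne by auto
  obtain Q1 where Q1: "chain m Q1" "distinct Q1" "hd Q1 = A" "last Q1 = D" "set Q1 = verts m - {X,E}"
    using cov3[OF H vs(1) DV vs(3) EV d1 c1] by blast
  obtain Q2 where Q2: "chain m Q2" "distinct Q2" "hd Q2 = D" "last Q2 = E" "set Q2 = verts m - {Y,A}"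
    using cov3[OF H DV EV vs(4) vs(1) d2 c2] by blast
  obtain Q0 where Q0: "chain m Q0" "distinct Q0" "hd Q0 = E" "last Q0 = B" "set Q0 = verts m - {A,D}"
    using cov3[OF H EV vs(2) vs(1) DV d0 c0] by blast
  have n0: "Q0 \<noteq> []" "Q1 \<noteq> []" "Q2 \<noteq> []" using Q0 Q1 Q2 chain_ne by blast+
  define full where "full = [A@[p]] @ (A@[r]) # (lift q Q1 @ (D@[p]) # (lift r Q2 @ (E@[q]) # lift p Q0))"
  have l0: "chain (Suc m) (lift p Q0)" by (rule chain_lift) (use Q0 pqr in auto)
  have l1: "chain (Suc m) (lift q Q1)" by (rule chain_lift) (use Q1 pqr in auto)
  have l2: "chain (Suc m) (lift r Q2)" by (rule chain_lift) (use Q2 pqr in auto)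
  have e3: "is_edge (Suc m) (last (lift r Q2)) (E@[q]) (hd (lift p Q0))"
    using edge_vert[OF EV pqr(3,2,1)] pqr Q0 Q2 n0 by simp
  have ch3: "chain (Suc m) (lift r Q2 @ (E@[q]) # lift p Q0)" by (rule chain_join[OF l2 l0 e3])
  have e2: "is_edge (Suc m) (last (lift q Q1)) (D@[p]) (hd (lift r Q2 @ (E@[q]) # lift p Q0))"
    using edge_vert[OF DV pqr(2,1,3)] pqr Q1 Q2 n0 by simp
  have ch2: "chain (Suc m) (lift q Q1 @ (D@[p]) # (lift r Q2 @ (E@[q]) # lift p Q0))"
    by (rule chain_join[OF l1 ch3 e2])
  have e1: "is_edge (Suc m) (last [A@[p]]) (A@[r]) (hd (lift q Q1 @ (D@[p]) # (lift r Q2 @ (E@[q]) # lift p Q0)))"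
    using edge_vert[OF vs(1) pqr(1,3,2)] pqr Q1 n0 by simp
  have ch: "chain (Suc m) full" unfolding full_def by (rule chain_join[OF _ ch2 e1]) simp
  have i3: "distinct (lift r Q2 @ (E@[q]) # lift p Q0)"
    by (rule distinct_join3) (use Q0 Q2 pqr lift_disj[of r p Q2 Q0] in \<open>simp_all add: lift_mem\<close>)
  have i2: "distinct (lift q Q1 @ (D@[p]) # (lift r Q2 @ (E@[q]) # lift p Q0))"
  proof (rule distinct_join3[OF _ i3])
    show "set (lift q Q1) \<inter> set (lift r Q2 @ (E @ [q]) # lift p Q0) = {}"
      using lift_disj[of q r Q1 Q2] lift_disj[of q p Q1 Q0] Q1 pqr by (auto simp: lift_mem)
  qed (use Q0 Q1 Q2 pqr in \<open>simp_all add: lift_mem\<close>)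
  have dist: "distinct full" unfolding full_def
  proof (rule distinct_join3[OF _ i2])
    show "set [A @ [p]] \<inter> set (lift q Q1 @ (D @ [p]) # lift r Q2 @ (E @ [q]) # lift p Q0) = {}"
      using Q0 pqr dDE ne by (auto simp: lift_mem)
    show "A @ [r] \<notin> set (lift q Q1 @ (D @ [p]) # lift r Q2 @ (E @ [q]) # lift p Q0)"
      using Q2 pqr dDE by (auto simp: lift_mem)
  qed (use pqr in auto)
  have st: "set full = verts (Suc m) - {X@[q], Y@[r]}"
  proof (rule set_eq_snoc)
    show "\<And>w. w \<in> set full \<Longrightarrow> \<exists>V k. w = V @ [k]" unfolding full_def lift_def by auto
    show "\<And>w. w \<in> verts (Suc m) - {X@[q], Y@[r]} \<Longrightarrow> \<exists>V k. w = V @ [k]" using snoc_form by blast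
    fix V k
    have L: "V@[k] \<in> set full \<longleftrightarrow> (V = A \<and> k = p) \<or> (V = A \<and> k = r) \<or> (k = q \<and> V \<in> verts m - {X,E}) \<or>
        (V = D \<and> k = p) \<or> (k = r \<and> V \<in> verts m - {Y,A}) \<or> (V = E \<and> k = q) \<or> (k = p \<and> V \<in> verts m - {A,D})"
      unfolding full_def by (simp add: Q0(5) Q1(5) Q2(5) del: Diff_iff insert_iff) blast
    have Rr: "V@[k] \<in> verts (Suc m) - {X@[q], Y@[r]} \<longleftrightarrow>
        V \<in> verts m \<and> k \<in> {0,1,2} \<and> \<not>(V = X \<and> k = q) \<and> \<not>(V = Y \<and> k = r)" by simp
    have "k = p \<or> k = q \<or> k = r \<or> k \<notin> {0,1,2}" using pqr by auto
    then show "V @ [k] \<in> set full \<longleftrightarrow> V @ [k] \<in> verts (Suc m) - {X@[q], Y@[r]}"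
      unfolding L Rr using vs DV EV dDE ne pqr by (elim disjE) auto
  qed
  have hf: "hd full = A@[p]" by (simp add: full_def)
  have lf: "last full = B@[p]" using n0 Q0 by (simp add: full_def lift_def last_map)
  show ?thesis by (rule coveredI[OF ch dist hf lf st])
qed

lemma snoc_split:
  assumes "v \<in> verts (Suc m)"
  shows "v = take m v @ [v ! m]" "take m v \<in> verts m"
proof -
  have l: "length v = Suc m" using assms verts_length by blast
  show "v = take m v @ [v ! m]" using l by (simp add: take_Suc_conv_app_nth[symmetric])
  have "set (take m v) \<subseteq> set v" by (rule set_take_subset)
  then show "take m v \<in> verts m" using assms l unfolding verts_def by auto
qed

lemma transport:
  assumes T: "\<And>a b x y. a \<in> verts d \<Longrightarrow> b \<in> verts d \<Longrightarrow> x \<in> verts d \<Longrightarrow> y \<in> verts d \<Longrightarrow>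
      distinct [a,b,x,y] \<Longrightarrow> P d a b x y \<Longrightarrow> covered d (a,b,x,y)"
    and c: "is_config d (a,b,x,y)" and o: "of_type P d (a,b,x,y)"
  shows "covered d (a,b,x,y)"
proof -
  have vs: "a \<in> verts d" "b \<in> verts d" "x \<in> verts d" "y \<in> verts d" and ds: "distinct [a,b,x,y]"
    using c unfolding is_config_def by auto
  obtain f where S: "is_symmetry d f" and h: "P d (f a) (f b) (f x) (f y) \<or> P d (f a) (f b) (f y) (f x)"
    using o unfolding of_type_def by auto
  have fv: "f a \<in> verts d" "f b \<in> verts d" "f x \<in> verts d" "f y \<in> verts d"
    using sym_verts[OF S] vs by auto
  have fi: "\<And>u w. u \<in> verts d \<Longrightarrow> w \<in> verts d \<Longrightarrow> u \<noteq> w \<Longrightarrow> f u \<noteq> f w"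
    using sym_inj[OF S] by blast
  have d1: "distinct [f a, f b, f x, f y]" using ds vs fi by simp
  have d2: "distinct [f a, f b, f y, f x]" using d1 by auto
  have "covered d (f a, f b, f x, f y)"
  proof (cases "P d (f a) (f b) (f x) (f y)")
    case True
    then show ?thesis using T fv d1 by blast
  next
    case False
    then have "P d (f a) (f b) (f y) (f x)" using h by blast
    then have "covered d (f a, f b, f y, f x)" using T fv d2 by blast
    then show ?thesis by (rule covered_swap)
  qed
  then show ?thesis by (rule sym_covered[OF S vs])
qed

lemma case_t1:
  assumes H: "Hyp m" "m \<ge> 4" and vs: "a \<in> verts (Suc m)" "b \<in> verts (Suc m)" "x \<in> verts (Suc m)" "y \<in> verts (Suc m)"
    and t: "t1 (Suc m) a b x y"
  shows "covered (Suc m) (a,b,x,y)"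
proof -
  have e: "a = take m a @ [0]" "b = take m b @ [1]" "x = take m x @ [0]" "y = take m y @ [2]"
    using snoc_split(1)[OF vs(1)] snoc_split(1)[OF vs(2)] snoc_split(1)[OF vs(3)] snoc_split(1)[OF vs(4)] t
    unfolding t1_def by auto
  have n: "take m a \<noteq> take m b" "take m a \<noteq> take m x" "take m a \<noteq> take m y" using t unfolding t1_def by auto
  have "covered (Suc m) (take m a @ [0], take m b @ [1], take m x @ [0], take m y @ [2])"
    by (rule route1[OF H]) (use snoc_split(2) vs n in auto)
  then show ?thesis using e by metis
qed

lemma case_t2:
  assumes H: "Hyp m" "m \<ge> 4" and vs: "a \<in> verts (Suc m)" "b \<in> verts (Suc m)" "x \<in> verts (Suc m)" "y \<in> verts (Suc m)"
    and t: "t2 (Suc m) a b x y"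
  shows "covered (Suc m) (a,b,x,y)"
proof -
  have e: "a = take m a @ [0]" "b = take m b @ [0]" "x = take m x @ [1]" "y = take m y @ [2]"
    using snoc_split(1)[OF vs(1)] snoc_split(1)[OF vs(2)] snoc_split(1)[OF vs(3)] snoc_split(1)[OF vs(4)] t
    unfolding t2_def by auto
  have n: "take m a \<noteq> take m b" "take m a \<noteq> take m x" "take m a \<noteq> take m y" using t unfolding t2_def by auto
  have "covered (Suc m) (take m a @ [0], take m b @ [0], take m x @ [1], take m y @ [2])"
    by (rule route2[OF H]) (use snoc_split(2) vs n in auto)
  then show ?thesis using e by metis
qed

lemma case_t3:
  assumes H: "Hyp m" "m \<ge> 4" and vs: "a \<in> verts (Suc m)" "b \<in> verts (Suc m)" "x \<in> verts (Suc m)" "y \<in> verts (Suc m)"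
    and ds: "distinct [a,b,x,y]" and t: "t3 (Suc m) a b x y"
  shows "covered (Suc m) (a,b,x,y)"
proof -
  have e: "a = take m a @ [0]" "b = take m b @ [1]" "x = take m x @ [0]" "y = take m y @ [1]"
    using snoc_split(1)[OF vs(1)] snoc_split(1)[OF vs(2)] snoc_split(1)[OF vs(3)] snoc_split(1)[OF vs(4)] t
    unfolding t3_def by auto
  have n: "take m a \<noteq> take m x" "take m b \<noteq> take m y" using ds e by (metis distinct_length_2_or_more)+
  have "covered (Suc m) (take m a @ [0], take m b @ [1], take m x @ [0], take m y @ [1])"
    by (rule route3[OF H]) (use snoc_split(2) vs n in auto)
  then show ?thesis using e by metis
qed

lemma case_t4:
  assumes H: "Hyp m" "m \<ge> 4" and vs: "a \<in> verts (Suc m)" "b \<in> verts (Suc m)" "x \<in> verts (Suc m)" "y \<in> verts (Suc m)"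
    and t: "t4 (Suc m) a b x y"
  shows "covered (Suc m) (a,b,x,y)"
proof -
  have e: "a = take m a @ [0]" "b = take m b @ [1]" "x = take m x @ [1]" "y = take m y @ [2]"
    using snoc_split(1)[OF vs(1)] snoc_split(1)[OF vs(2)] snoc_split(1)[OF vs(3)] snoc_split(1)[OF vs(4)] t
    unfolding t4_def by auto
  have n: "take m b \<noteq> take m a" "take m b \<noteq> take m x" "take m b \<noteq> take m y" using t unfolding t4_def by auto
  have "covered (Suc m) (take m b @ [1], take m a @ [0], take m x @ [1], take m y @ [2])"
    by (rule route1[OF H]) (use snoc_split(2) vs n in auto)
  then have "covered (Suc m) (take m a @ [0], take m b @ [1], take m x @ [1], take m y @ [2])"
    by (rule covered_rev)
  then show ?thesis using e by metis
qed

lemma case_t5: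
  assumes H: "Hyp m" "m \<ge> 4" and vs: "a \<in> verts (Suc m)" "b \<in> verts (Suc m)" "x \<in> verts (Suc m)" "y \<in> verts (Suc m)"
    and t: "t5 (Suc m) a b x y"
  shows "covered (Suc m) (a,b,x,y)"
proof -
  have e: "a = take m a @ [0]" "b = take m b @ [0]" "x = take m x @ [1]" "y = take m y @ [2]"
    using snoc_split(1)[OF vs(1)] snoc_split(1)[OF vs(2)] snoc_split(1)[OF vs(3)] snoc_split(1)[OF vs(4)] t
    unfolding t5_def by auto
  have n: "take m b \<noteq> take m a" "take m b \<noteq> take m x" "take m b \<noteq> take m y" using t unfolding t5_def by auto
  have "covered (Suc m) (take m b @ [0], take m a @ [0], take m x @ [1], take m y @ [2])"
    by (rule route2[OF H]) (use snoc_split(2) vs n in auto)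
  then have "covered (Suc m) (take m a @ [0], take m b @ [0], take m x @ [1], take m y @ [2])"
    by (rule covered_rev)
  then show ?thesis using e by metis
qed

theorem lemma1p5:
  fixes d :: nat
  assumes "d \<ge> 5"
    and "\<forall>c. is_config (d-1) c \<and>
           (of_type phi1 (d-1) c \<or> of_type phi2 (d-1) c \<or> of_type phi3 (d-1) c \<or> of_type phi4 (d-1) c)
           \<longrightarrow> covered (d-1) c"
  shows "\<forall>c. is_config d c \<and>
           (of_type t1 d c \<or> of_type t2 d c \<or> of_type t3 d c \<or> of_type t4 d c \<or> of_type t5 d c)
           \<longrightarrow> covered d c"
proof (intro allI impI)
  fix c
  assume asm: "is_config d c \<and>
           (of_type t1 d c \<or> of_type t2 d c \<or> of_type t3 d c \<or> of_type t4 d c \<or> of_type t5 d c)"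
  obtain a b x y where c: "c = (a,b,x,y)" by (cases c) auto
  define m where "m = d - 1"
  have d: "d = Suc m" and m4: "m \<ge> 4" using assms(1) unfolding m_def by auto
  have H: "Hyp m" unfolding Hyp_def m_def using assms(2) by blast
  have ic: "is_config d (a,b,x,y)" using asm c by simp
  have T1: "\<And>a b x y. a \<in> verts d \<Longrightarrow> b \<in> verts d \<Longrightarrow> x \<in> verts d \<Longrightarrow> y \<in> verts d \<Longrightarrow>
      distinct [a,b,x,y] \<Longrightarrow> t1 d a b x y \<Longrightarrow> covered d (a,b,x,y)"
    unfolding d using case_t1[OF H m4] by blast
  have T2: "\<And>a b x y. a \<in> verts d \<Longrightarrow> b \<in> verts d \<Longrightarrow> x \<in> verts d \<Longrightarrow> y \<in> verts d \<Longrightarrow>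
      distinct [a,b,x,y] \<Longrightarrow> t2 d a b x y \<Longrightarrow> covered d (a,b,x,y)"
    unfolding d using case_t2[OF H m4] by blast
  have T3: "\<And>a b x y. a \<in> verts d \<Longrightarrow> b \<in> verts d \<Longrightarrow> x \<in> verts d \<Longrightarrow> y \<in> verts d \<Longrightarrow>
      distinct [a,b,x,y] \<Longrightarrow> t3 d a b x y \<Longrightarrow> covered d (a,b,x,y)"
    unfolding d using case_t3[OF H m4] by blast
  have T4: "\<And>a b x y. a \<in> verts d \<Longrightarrow> b \<in> verts d \<Longrightarrow> x \<in> verts d \<Longrightarrow> y \<in> verts d \<Longrightarrow>
      distinct [a,b,x,y] \<Longrightarrow> t4 d a b x y \<Longrightarrow> covered d (a,b,x,y)"
    unfolding d using case_t4[OF H m4] by blast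
  have T5: "\<And>a b x y. a \<in> verts d \<Longrightarrow> b \<in> verts d \<Longrightarrow> x \<in> verts d \<Longrightarrow> y \<in> verts d \<Longrightarrow>
      distinct [a,b,x,y] \<Longrightarrow> t5 d a b x y \<Longrightarrow> covered d (a,b,x,y)"
    unfolding d using case_t5[OF H m4] by blast
  have "of_type t1 d (a,b,x,y) \<or> of_type t2 d (a,b,x,y) \<or> of_type t3 d (a,b,x,y) \<or>
        of_type t4 d (a,b,x,y) \<or> of_type t5 d (a,b,x,y)" using asm c by simp
  then have "covered d (a,b,x,y)"
  proof (elim disjE)
    assume "of_type t1 d (a,b,x,y)" then show ?thesis using transport[OF T1 ic] by blast
  next
    assume "of_type t2 d (a,b,x,y)" then show ?thesis using transport[OF T2 ic] by blast
  next
    assume "of_type t3 d (a,b,x,y)" then show ?thesis using transport[OF T3 ic] by blast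
  next
    assume "of_type t4 d (a,b,x,y)" then show ?thesis using transport[OF T4 ic] by blast
  next
    assume "of_type t5 d (a,b,x,y)" then show ?thesis using transport[OF T5 ic] by blast
  qed
  then show "covered d c" using c by simp
qed

end
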